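(* Let $s=s_1+is_2$ with $s_1>0$, $s_2\in\mathbb R$ (the same $s_1$ as in $\alpha,\beta$). Then for all $x\in\Gamma_\rho$ and $y\in\Gamma_R$, $$|\rho_s(\widetilde x,y)/s|\ge d,\qquad \operatorname{Re}[\rho_s(\widetilde x,y)]\ge\rho\,\hat\sigma(\rho)=\frac{\sigma_0 d}{m+1}.$$
   Context: Let $0<R<\rho$, $d=\rho-R$, $\Gamma_r=\{|x|=r\}$. Fix $s_1>0$, $\sigma_0>0$ and an integer $m\ge1$; let $\sigma(r)=0$ for $0\le r\le R$, $\sigma(r)=\sigma_0((r-R)/(\rho-R))^m$ for $R\le r\le\rho$, $\sigma(r)=\sigma_0$ for $r\ge\rho$; $\alpha(r)=1+s_1^{-1}\sigma(r)$; $\beta(r)=\frac1r\int_0^r\alpha(\tau)d\tau=1+s_1^{-1}\hat\sigma(r)$, with $\hat\sigma(r)=\frac1r\int_R^r\sigma(\tau)d\tau$ for $r\ge R$. The real stretched coordinates of $x\in\mathbb R^3$ are $\widetilde x=\beta(|x|)\,x$ (so $|\widetilde x|=\int_0^{|x|}\alpha$ and $\widetilde x$ has the same angular coordinates as $x$). The complex distance is $\rho_s(\widetilde x,y)=\big[s^2|\widetilde x-y|^2\big]^{1/2}$, where $z^{1/2}$ is the branch analytic on $\mathbb C\setminus(-\infty,0]$ with positive real part. *)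

theory Defs
  imports "HOL-Analysis.Analysis"
begin

definition pml_sigma :: "real \<Rightarrow> real \<Rightarrow> real \<Rightarrow> nat \<Rightarrow> real \<Rightarrow> real" where
  "pml_sigma R \<rho> \<sigma>\<^sub>0 m r =
     (if r \<le> R then 0
      else if r \<le> \<rho> then \<sigma>\<^sub>0 * ((r - R) / (\<rho> - R)) ^ m
      else \<sigma>\<^sub>0)"

definition pml_alpha :: "real \<Rightarrow> real \<Rightarrow> real \<Rightarrow> nat \<Rightarrow> real \<Rightarrow> real \<Rightarrow> real" where
  "pml_alpha R \<rho> \<sigma>\<^sub>0 m s\<^sub>1 r = 1 + pml_sigma R \<rho> \<sigma>\<^sub>0 m r / s\<^sub>1"

text \<open>beta(r) = (1/r) * integral_0^r alpha (value 1 at r = 0, the limit)\<close>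
definition pml_beta :: "real \<Rightarrow> real \<Rightarrow> real \<Rightarrow> nat \<Rightarrow> real \<Rightarrow> real \<Rightarrow> real" where
  "pml_beta R \<rho> \<sigma>\<^sub>0 m s\<^sub>1 r =
     (if r = 0 then 1 else integral {0..r} (pml_alpha R \<rho> \<sigma>\<^sub>0 m s\<^sub>1) / r)"

definition pml_sigma_hat :: "real \<Rightarrow> real \<Rightarrow> real \<Rightarrow> nat \<Rightarrow> real \<Rightarrow> real" where
  "pml_sigma_hat R \<rho> \<sigma>\<^sub>0 m r = integral {R..r} (pml_sigma R \<rho> \<sigma>\<^sub>0 m) / r"

definition stretched :: "real \<Rightarrow> real \<Rightarrow> real \<Rightarrow> nat \<Rightarrow> real \<Rightarrow> real^3 \<Rightarrow> real^3" where
  "stretched R \<rho> \<sigma>\<^sub>0 m s\<^sub>1 x = pml_beta R \<rho> \<sigma>\<^sub>0 m s\<^sub>1 (norm x) *\<^sub>R x"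

definition complex_dist :: "complex \<Rightarrow> real^3 \<Rightarrow> real^3 \<Rightarrow> complex" where
  "complex_dist s z y = csqrt (s\<^sup>2 * complex_of_real ((norm (z - y))\<^sup>2))"

end

theory Submission
  imports Defs
begin

lemma poly_int:
  fixes R \<rho> :: real and m :: nat
  assumes "R < \<rho>"
  shows "((\<lambda>r. ((r - R) / (\<rho> - R)) ^ m) has_integral (\<rho> - R) / (real m + 1)) {R..\<rho>}"
proof -
  define d where "d = \<rho> - R"
  have d: "d > 0" using assms d_def by simp
  define F where "F = (\<lambda>r::real. d / (real m + 1) * ((r - R) / d) ^ Suc m)"
  have "((\<lambda>r. ((r - R) / d) ^ m) has_integral (F \<rho> - F R)) {R..\<rho>}"
  proof (rule fundamental_theorem_of_calculus)
    show "R \<le> \<rho>" using assms by simp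
    fix x assume "x \<in> {R..\<rho>}"
    have e: "d / (real m + 1) * ((1 + real m) * ((1 / d) * ((x - R) / d) ^ m)) = ((x - R) / d) ^ m"
    proof -
      have "1 + real m \<noteq> 0" by simp
      have "\<And>t::real. d / (real m + 1) * ((1 + real m) * ((1 / d) * t)) = t"
        using d by (simp add: add.commute[of "real m" 1])
      then show ?thesis by blast
    qed
    have "(F has_real_derivative d / (real m + 1) * ((1 + real m) * ((1 / d) * ((x - R) / d) ^ m))) (at x)"
      unfolding F_def
      apply (intro DERIV_cmult DERIV_power_Suc)
      using d by (auto intro!: derivative_eq_intros)
    hence "(F has_real_derivative ((x - R) / d) ^ m) (at x)" by (simp only: e)
    thus "(F has_vector_derivative ((x - R) / d) ^ m) (at x within {R..\<rho>})"
      using has_field_derivative_at_within has_real_derivative_iff_has_vector_derivative by blast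
  qed
  moreover have "F \<rho> - F R = (\<rho> - R) / (real m + 1)"
    unfolding F_def d_def using assms by simp
  ultimately show ?thesis by (simp add: d_def)
qed


theorem lemma4p2:
  fixes R \<rho> \<sigma>\<^sub>0 s\<^sub>1 s\<^sub>2 :: real and m :: nat and x y :: "real^3"
  assumes "0 < R" "R < \<rho>" "0 < s\<^sub>1" "0 < \<sigma>\<^sub>0" "1 \<le> m"
    and "norm x = \<rho>" "norm y = R"
  shows "norm (complex_dist (Complex s\<^sub>1 s\<^sub>2) (stretched R \<rho> \<sigma>\<^sub>0 m s\<^sub>1 x) y / Complex s\<^sub>1 s\<^sub>2)
           \<ge> \<rho> - R \<and>
         Re (complex_dist (Complex s\<^sub>1 s\<^sub>2) (stretched R \<rho> \<sigma>\<^sub>0 m s\<^sub>1 x) y)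
           \<ge> \<rho> * pml_sigma_hat R \<rho> \<sigma>\<^sub>0 m \<rho> \<and>
         \<rho> * pml_sigma_hat R \<rho> \<sigma>\<^sub>0 m \<rho> = \<sigma>\<^sub>0 * (\<rho> - R) / (real m + 1)"
proof -
  define c where "c = \<sigma>\<^sub>0 * (\<rho> - R) / (real m + 1)"
  have c0: "c \<ge> 0" unfolding c_def using assms by simp
  have sig_eq: "pml_sigma R \<rho> \<sigma>\<^sub>0 m r = \<sigma>\<^sub>0 * ((r - R) / (\<rho> - R)) ^ m" if "r \<in> {R..\<rho>}" for r
    using that assms unfolding pml_sigma_def by (cases "r = R") auto
  have isig: "(pml_sigma R \<rho> \<sigma>\<^sub>0 m has_integral c) {R..\<rho>}"
    using has_integral_eq[OF sig_eq[symmetric] has_integral_mult_right[OF poly_int[OF assms(2)], of \<sigma>\<^sub>0]]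
    unfolding c_def by simp
  have hat: "\<rho> * pml_sigma_hat R \<rho> \<sigma>\<^sub>0 m \<rho> = c"
    unfolding pml_sigma_hat_def using integral_unique[OF isig] assms by simp
  have ia1: "(pml_alpha R \<rho> \<sigma>\<^sub>0 m s\<^sub>1 has_integral R) {0..R}"
  proof -
    have "((\<lambda>r. 1::real) has_integral R) {0..R}"
      using has_integral_const_real[of "1::real" 0 R] assms by simp
    then show ?thesis
      by (rule has_integral_eq[rotated]) (auto simp: pml_alpha_def pml_sigma_def)
  qed
  have ia2: "(pml_alpha R \<rho> \<sigma>\<^sub>0 m s\<^sub>1 has_integral ((\<rho> - R) + c / s\<^sub>1)) {R..\<rho>}"
  proof -
    have "((\<lambda>r. 1::real) has_integral (\<rho> - R)) {R..\<rho>}"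
      using has_integral_const_real[of "1::real" R \<rho>] assms by simp
    moreover have "((\<lambda>r. pml_sigma R \<rho> \<sigma>\<^sub>0 m r / s\<^sub>1) has_integral c / s\<^sub>1) {R..\<rho>}"
      using has_integral_mult_right[OF isig, of "1/s\<^sub>1"] by (simp add: mult.commute)
    ultimately have "((\<lambda>r. 1 + pml_sigma R \<rho> \<sigma>\<^sub>0 m r / s\<^sub>1) has_integral ((\<rho> - R) + c / s\<^sub>1)) {R..\<rho>}"
      by (rule has_integral_add)
    then show ?thesis unfolding pml_alpha_def by simp
  qed
  have ia: "(pml_alpha R \<rho> \<sigma>\<^sub>0 m s\<^sub>1 has_integral (\<rho> + c / s\<^sub>1)) {0..\<rho>}"
    using has_integral_combine[OF _ _ ia1 ia2] assms by simp
  define B where "B = pml_beta R \<rho> \<sigma>\<^sub>0 m s\<^sub>1 \<rho>"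
  have B: "B * \<rho> = \<rho> + c / s\<^sub>1"
    unfolding B_def pml_beta_def using integral_unique[OF ia] assms by simp
  have Bpos: "B > 0" using B assms c0
    by (metis add_pos_nonneg divide_nonneg_pos less_trans zero_less_mult_pos2 \<open>0 < R\<close>)
  define D where "D = norm (stretched R \<rho> \<sigma>\<^sub>0 m s\<^sub>1 x - y)"
  have "norm (stretched R \<rho> \<sigma>\<^sub>0 m s\<^sub>1 x) = B * \<rho>"
    unfolding stretched_def B_def using assms Bpos B_def by simp
  hence Dge: "D \<ge> (\<rho> - R) + c / s\<^sub>1"
    unfolding D_def using norm_triangle_ineq2[of "stretched R \<rho> \<sigma>\<^sub>0 m s\<^sub>1 x" y] B assms by simp
  have cs: "c / s\<^sub>1 \<ge> 0" using c0 assms by simp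
  have Dpos: "D > 0" using Dge cs assms by simp
  define s where "s = Complex s\<^sub>1 s\<^sub>2"
  have s0: "s \<noteq> 0" unfolding s_def using assms by (simp add: complex_eq_iff)
  have cd: "complex_dist s (stretched R \<rho> \<sigma>\<^sub>0 m s\<^sub>1 x) y = s * complex_of_real D"
    unfolding complex_dist_def D_def[symmetric]
  proof (rule csqrt_unique)
    show "(s * complex_of_real D)\<^sup>2 = s\<^sup>2 * complex_of_real (D\<^sup>2)"
      by (simp add: power_mult_distrib)
    show "0 < Re (s * complex_of_real D) \<or> Re (s * complex_of_real D) = 0 \<and> 0 \<le> Im (s * complex_of_real D)"
      using Dpos assms unfolding s_def by simp
  qed
  have n1: "norm (complex_dist s (stretched R \<rho> \<sigma>\<^sub>0 m s\<^sub>1 x) y / s) = D"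
    using cd s0 Dpos by (simp add: norm_mult)
  have r1: "Re (complex_dist s (stretched R \<rho> \<sigma>\<^sub>0 m s\<^sub>1 x) y) = s\<^sub>1 * D"
    using cd unfolding s_def by simp
  have "s\<^sub>1 * D \<ge> s\<^sub>1 * ((\<rho> - R) + c / s\<^sub>1)"
    using Dge assms by (simp add: mult_left_mono)
  also have "s\<^sub>1 * ((\<rho> - R) + c / s\<^sub>1) = s\<^sub>1 * (\<rho> - R) + c"
    using assms by (simp add: field_simps)
  finally have "s\<^sub>1 * D \<ge> c" using assms by (smt (verit) mult_pos_pos)
  then show ?thesis
    using n1 r1 hat Dge cs unfolding s_def c_def by simp
qed

end
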